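(* Let $w=\mu^{\omega}(a)$ where $\mu$ is an injective $r$-uniform morphism ($r\ge2$) on a finite alphabet, prolongable on the letter $a$. If $w$ is periodic, then no letter appears twice in the minimal repeating unit of $w$ (the shortest word $t$ with $w=t^{\omega}$).
   Context: A morphism $\mu$ satisfies $\mu(uv)=\mu(u)\mu(v)$ for finite $u$; it is $r$-uniform if $|\mu(b)|=r$ for all letters $b$; prolongable on $a$ means $\mu(a)$ begins with $a$, and $\mu^{\omega}(a)$ is the infinite word having every $\mu^n(a)$ as a prefix. *)

theory Defs
  imports Main
begin

definition morph :: "('a \<Rightarrow> 'a list) \<Rightarrow> 'a list \<Rightarrow> 'a list" where
  "morph \<mu> u = concat (map \<mu> u)"

text \<open>The infinite word t^omega, for nonempty t, as a function on positions.\<close>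
definition omega_pow :: "'a list \<Rightarrow> nat \<Rightarrow> 'a" where
  "omega_pow t i = t ! (i mod length t)"

end

theory Submission
  imports Defs "HOL-Number_Theory.Number_Theory"
begin

lemma length_morph:
  assumes "\<forall>b. length (\<mu> b) = r"
  shows "length (morph \<mu> u) = r * length u"
  using assms by (induction u) (auto simp: morph_def)

lemma nth_morph:
  assumes "\<forall>b. length (\<mu> b) = r" "n < length u" "k < r"
  shows "morph \<mu> u ! (r*n+k) = \<mu> (u!n) ! k"
  using assms(2)
proof (induction u arbitrary: n)
  case Nil then show ?case by simp
next
  case (Cons x u)
  show ?case
  proof (cases n)
    case 0 then show ?thesis using assms by (simp add: morph_def nth_append)
  next
    case (Suc m)
    have "morph \<mu> (x # u) = \<mu> x @ morph \<mu> u" by (simp add: morph_def)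
    moreover have "r*n+k = r + (r*m+k)" using Suc by simp
    ultimately have "morph \<mu> (x # u) ! (r*n+k) = morph \<mu> u ! (r*m+k)"
      using assms(1) by (simp add: nth_append)
    then show ?thesis using Cons Suc by simp
  qed
qed

lemma length_iter:
  assumes "\<forall>b. length (\<mu> b) = r"
  shows "length ((morph \<mu> ^^ N) [a]) = r ^ N"
  using assms by (induction N) (auto simp: length_morph)

lemma period_sub:
  fixes w :: "nat \<Rightarrow> 'a"
  assumes "q > 0" "\<forall>n. w (n + q) = w n"
  shows "w = omega_pow (map w [0..<q])"
proof
  fix n
  have per: "w (m + q * k) = w m" for m k
  proof (induction k)
    case (Suc k)
    have "w (m + q * Suc k) = w ((m + q*k) + q)" by (simp add: algebra_simps)
    then show ?case using assms(2) Suc by simp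
  qed simp
  have "w n = w (n mod q + q * (n div q))" by simp
  also have "\<dots> = w (n mod q)" by (rule per)
  finally have "w n = w (n mod q)" .
  then show "w n = omega_pow (map w [0..<q]) n"
    using assms by (simp add: omega_pow_def)
qed

theorem theorem13:
  fixes \<mu> :: "'a::finite \<Rightarrow> 'a list" and r :: nat and a :: 'a and w :: "nat \<Rightarrow> 'a"
  assumes inj: "inj (morph \<mu>)"
    and unif: "\<forall>b. length (\<mu> b) = r"
    and r2: "r \<ge> 2"
    and prol: "\<mu> a \<noteq> [] \<and> hd (\<mu> a) = a"
    and fixpt: "\<forall>n i. i < length ((morph \<mu> ^^ n) [a]) \<longrightarrow> w i = (morph \<mu> ^^ n) [a] ! i"
    and periodic: "\<exists>t. t \<noteq> [] \<and> w = omega_pow t"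
  shows "\<forall>t. t \<noteq> [] \<and> w = omega_pow t
           \<and> (\<forall>s. s \<noteq> [] \<and> w = omega_pow s \<longrightarrow> length t \<le> length s)
           \<longrightarrow> distinct t"
proof (intro allI impI)
  fix t assume H: "t \<noteq> [] \<and> w = omega_pow t
           \<and> (\<forall>s. s \<noteq> [] \<and> w = omega_pow s \<longrightarrow> length t \<le> length s)"
  define p where "p = length t"
  have p0: "p > 0" using H p_def by simp
  have wmod: "w n = w m" if "n mod p = m mod p" for n m
    using H that by (simp add: omega_pow_def p_def)
  have minp: "p \<le> q" if "q > 0" "\<forall>n. w (n + q) = w n" for q
  proof -
    have "w = omega_pow (map w [0..<q])" using period_sub that by blast
    moreover have "map w [0..<q] \<noteq> []" using that by simp
    ultimately have "length t \<le> length (map w [0..<q])" using H by blast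
    then show ?thesis using p_def by simp
  qed
  have injl: "b = c" if "\<mu> b = \<mu> c" for b c
  proof -
    have "morph \<mu> [b] = morph \<mu> [c]" using that by (simp add: morph_def)
    then show ?thesis using inj by (auto dest: injD)
  qed
  have key: "w (r*n+k) = \<mu> (w n) ! k" if "k < r" for n k
  proof -
    have "n < 2 ^ n" by (rule less_exp)
    also have "(2::nat) ^ n \<le> r ^ n" using r2 by (rule power_mono) simp
    finally have "n < r ^ n" .
    then have n1: "n < length ((morph \<mu> ^^ n) [a])" using length_iter[OF unif] by simp
    have "r*(n+1) \<le> r * r^n" using \<open>n < r^n\<close> by (intro mult_le_mono2) simp
    then have "r*n+k < r * r^n" using that by simp
    moreover have "length ((morph \<mu> ^^ Suc n) [a]) = r ^ Suc n" by (rule length_iter[OF unif])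
    ultimately have "r*n+k < length ((morph \<mu> ^^ Suc n) [a])" by simp
    then have "w (r*n+k) = (morph \<mu> ^^ Suc n) [a] ! (r*n+k)" using fixpt by blast
    also have "\<dots> = morph \<mu> ((morph \<mu> ^^ n) [a]) ! (r*n+k)" by simp
    also have "\<dots> = \<mu> ((morph \<mu> ^^ n) [a] ! n) ! k" using nth_morph[OF unif n1 that] .
    also have "\<dots> = \<mu> (w n) ! k" using fixpt n1 by simp
    finally show ?thesis .
  qed
  have blk: "w n = w m" if "\<forall>k<r. w (r*n+k) = w (r*m+k)" for n m
  proof -
    have "\<mu> (w n) = \<mu> (w m)"
      by (rule nth_equalityI) (use unif that key in auto)
    then show ?thesis using injl by blast
  qed
  have cop: "coprime r p"
  proof (rule ccontr)
    assume nc: "\<not> coprime r p"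
    define d where "d = gcd r p"
    have "d \<noteq> 1" using nc unfolding d_def by (metis coprime_iff_gcd_eq_1)
    moreover have "d > 0" using p0 d_def by simp
    ultimately have d1: "d > 1" by simp
    define q where "q = p div d"
    obtain q' where pq: "p = d * q'" using d_def by (metis gcd_dvd2 dvdE)
    obtain r' where rr: "r = d * r'" using d_def by (metis gcd_dvd1 dvdE)
    have qq: "q = q'" using q_def pq d1 by simp
    have q0: "q > 0" using pq qq p0 by (cases q') auto
    have qp: "q < p" using q_def d1 p0 by simp
    have "w (n + q) = w n" for n
    proof (rule blk, intro allI impI)
      fix k assume "k < r"
      have "r * q = r' * p" using pq rr qq by simp
      then have "r*(n+q)+k = (r*n+k) + r' * p" by (simp add: algebra_simps)
      moreover have "((r*n+k) + r' * p) mod p = (r*n+k) mod p" by simp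
      ultimately have "(r*(n+q)+k) mod p = (r*n+k) mod p" by metis
      then show "w (r*(n+q)+k) = w (r*n+k)" by (rule wmod)
    qed
    then have "p \<le> q" using minp q0 by blast
    then show False using qp by simp
  qed
  have ecg: "[r ^ totient p = 1] (mod p)" using euler_theorem cop by blast
  define e where "e = totient p"
  have e0: "e > 0" using p0 e_def by simp
  have fwd: "\<forall>c < r^N. w (r^N*x+c) = w (r^N*y+c)" if "w x = w y" for N x y
  proof (induction N)
    case 0 then show ?case using that by simp
  next
    case (Suc N)
    show ?case
    proof (intro allI impI)
      fix c assume c: "c < r ^ Suc N"
      have rp: "r > 0" using r2 by simp
      have c1: "c div r < r^N" using c rp by (simp add: less_mult_imp_div_less mult.commute)
      have k: "c mod r < r" using rp by simp
      have eq: "r^Suc N * z + c = r * (r^N*z + c div r) + c mod r" for z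
        by (simp add: algebra_simps)
      show "w (r ^ Suc N * x + c) = w (r ^ Suc N * y + c)"
        unfolding eq key[OF k] using Suc c1 by simp
    qed
  qed
  have step: "w (x+1) = w (y+1)" if "w x = w y" for x y
  proof -
    have r1: "1 < r^e" using r2 e0 by (intro one_less_power) auto
    have "w (r^e*x+1) = w (r^e*y+1)" using fwd[OF that] r1 by blast
    moreover have "(r^e*z+1) mod p = (z+1) mod p" for z
    proof -
      have "[r^e*z+1 = 1*z+1] (mod p)" using ecg e_def by (intro cong_add cong_mult) auto
      then show ?thesis by (simp add: cong_def)
    qed
    ultimately show ?thesis using wmod by metis
  qed
  show "distinct t"
  proof (rule ccontr)
    assume "\<not> distinct t"
    then obtain i0 j0 where ij0: "i0 < p" "j0 < p" "i0 \<noteq> j0" "t!i0 = t!j0"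
      using p_def by (auto simp: distinct_conv_nth)
    define i where "i = min i0 j0"
    define j where "j = max i0 j0"
    have ij: "i < j" "j < p" "t!i = t!j" using ij0 by (auto simp: i_def j_def min_def max_def)
    have wij: "w i = w j" using ij H by (simp add: omega_pow_def p_def)
    have sh: "w (i+m) = w (j+m)" for m
    proof (induction m)
      case 0 show ?case using wij by simp
    next
      case (Suc m)
      have "w (i+m+1) = w (j+m+1)" using step[OF Suc] .
      then show ?case by simp
    qed
    define d where "d = j - i"
    have "w (n + d) = w n" for n
    proof -
      define m where "m = n + p*i - i"
      have pi: "p*i \<ge> i" using p0 by simp
      have "i + m = n + p*i" unfolding m_def using pi by linarith
      moreover have "j + m = (n + d) + p*i" unfolding m_def d_def using pi ij by linarith
      ultimately have "i + m = n + p*i" "j + m = (n + d) + p*i" by auto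
      then have A: "w (n + p*i) = w (n + d + p*i)" using sh[of m] by simp
      have B: "w (n + d + p*i) = w (n+d)" by (rule wmod) simp
      have C: "w (n + p*i) = w n" by (rule wmod) simp
      have "w (n+d) = w (n + p*i)" "w n = w (n+p*i)" using A B C by auto
      then show ?thesis by simp
    qed
    then have "p \<le> d" using minp ij d_def by simp
    then show False using ij d_def by simp
  qed
qed

end
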